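(* Let $p \ge 2$ and $n \ge 1$ be integers. Let $\mathcal{C}_\bullet, \widetilde{\mathcal{C}} \in \mathbb{R}^{\otimes^p n}_{\mathrm{sym}}$, let $W \in \mathbb{R}^{n\times n}$ be nonsingular, let $s \in \mathbb{R}^n$ be nonzero, and set $v = W^{-T}W^{-1}s$. Then the following four descriptions all determine one and the same tensor $\mathcal{C}_+ \in \mathbb{R}^{\otimes^p n}_{\mathrm{sym}}$, and it is unique: (a) $\mathcal{C}_+$ is the unique minimizer of $\|(\mathcal{C}-\mathcal{C}_\bullet)[W]^p\|_F$ over all $\mathcal{C} \in \mathbb{R}^{\otimes^p n}_{\mathrm{sym}}$ subject to $\mathcal{C}[s] = \widetilde{\mathcal{C}}[s]$; (b) $\mathcal{C}_+ = \mathcal{C}_\bullet + \sum_{j=1}^p (-1)^{j+1}\binom{p}{j} (v^T s)^{-j}\, P_{\mathrm{sym}}\big( (\otimes^j v) \otimes (\widetilde{\mathcal{C}}-\mathcal{C}_\bullet)[s]^j \big)$; (c) $\mathcal{C}_+ = \mathcal{C}_\bullet + P_{\mathrm{sym}}(\mathcal{A}\otimes v)$, where $\mathcal{A}$ is the unique tensor in $\mathbb{R}^{\otimes^{p-1} n}_{\mathrm{sym}}$ satisfying $P_{\mathrm{sym}}(\mathcal{A}\otimes v)[s] = (\widetilde{\mathcal{C}}-\mathcal{C}_\bullet)[s]$; (d) $(\mathcal{C}_+ - \widetilde{\mathcal{C}})[W]^p = (\mathcal{C}_\bullet - \widetilde{\mathcal{C}})[W]^p\left[ I - \frac{W^{-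1}ss^TW^{-T}}{s^TW^{-T}W^{-1}s}\right]^p$.
   Context: A $p$-tensor $\mathcal{T} \in \mathbb{R}^{\otimes^p n}$ is a multilinear map $(\mathbb{R}^n)^p \to \mathbb{R}$. For $q \le p$ vectors, $\mathcal{T}[s_1,\dots,s_q]$ is the $(p-q)$-tensor obtained by fixing the first $q$ arguments; $\mathcal{T}[s]^q$ means $\mathcal{T}[s,\dots,s]$ ($q$ times), and $\mathcal{T}[s]$ means $\mathcal{T}[s]^1$. For matrices, $(\mathcal{T}[M_1,\dots,M_p])[s_1,\dots,s_p] = \mathcal{T}[M_1s_1,\dots,M_ps_p]$, and $\mathcal{T}[M]^p = \mathcal{T}[M,\dots,M]$. The outer product is $(\mathcal{T}_1\otimes\mathcal{T}_2)[s_1,\dots,s_{p_1+p_2}] = \mathcal{T}_1[s_1,\dots,s_{p_1}]\,\mathcal{T}_2[s_{p_1+1},\dots,s_{p_1+p_2}]$ (a $0$-tensor is a scalar), vectors are regarded as 1-tensors via $v[s]=v^Ts$, and $\otimes^j v = v\otimes\cdots\otimes v$ ($j$ factors). For $\sigma$ in the symmetric group $S_p$, $\sigma(\mathcal{T})[s_1,\dots,s_p]=\mathcal{T}[s_{\sigma(1)},\dots,s_{\sigma(p)}]$; $\mathcal{T}$ is symmetric if $\sigma(\mathcal{T})=\mathcal{T}$ for all $\sigma$, $\mathbb{R}^{\otimes^p n}_{\mathrm{sym}}$ is the space of symmetric $p$-tensors, and $P_{\mathrm{sym}}(\mathcal{T}) = \frac{1}{p!}\sum_{\sigma\in S_p}\sigma(\mathcal{T})$.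 $\|\cdot\|_F$ is the Frobenius norm of the array of entries $\mathcal{T}[e_{i_1},\dots,e_{i_p}]$. *)

theory Defs
  imports "HOL-Analysis.Analysis" "HOL-Combinatorics.Permutations"
begin

text \<open>A p-tensor on R^n (n = CARD('n)) is represented by its array of entries
  T[e_i1,...,e_ip], i.e. a function on index lists of length p; it is required
  to vanish on index lists of any other length.\<close>

type_synonym 'n tensor = "'n list \<Rightarrow> real"

definition is_tensor :: "nat \<Rightarrow> 'n tensor \<Rightarrow> bool" where
  "is_tensor p T \<longleftrightarrow> (\<forall>xs. length xs \<noteq> p \<longrightarrow> T xs = 0)"

definition perm_tensor :: "(nat \<Rightarrow> nat) \<Rightarrow> 'n tensor \<Rightarrow> 'n tensor" where
  "perm_tensor \<sigma> T = (\<lambda>xs. T (permute_list \<sigma> xs))"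

definition sym_tensor :: "nat \<Rightarrow> 'n tensor \<Rightarrow> bool" where
  "sym_tensor p T \<longleftrightarrow> is_tensor p T \<and>
     (\<forall>\<sigma>. \<sigma> permutes {..<p} \<longrightarrow> perm_tensor \<sigma> T = T)"

definition Psym :: "nat \<Rightarrow> 'n tensor \<Rightarrow> 'n tensor" where
  "Psym p T = (\<lambda>xs. if length xs = p then
      (1 / fact p) * (\<Sum>\<sigma>\<in>{\<sigma>. \<sigma> permutes {..<p}}. perm_tensor \<sigma> T xs) else 0)"

definition contr :: "'n tensor \<Rightarrow> real ^ 'n \<Rightarrow> 'n tensor" where
  "contr T s = (\<lambda>xs. \<Sum>i\<in>UNIV. s $ i * T (i # xs))"

definition contr_pow :: "'n tensor \<Rightarrow> real ^ 'n \<Rightarrow> nat \<Rightarrow> 'n tensor" where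
  "contr_pow T s q = ((\<lambda>U. contr U s) ^^ q) T"

definition outer :: "nat \<Rightarrow> 'n tensor \<Rightarrow> 'n tensor \<Rightarrow> 'n tensor" where
  "outer p1 T1 T2 = (\<lambda>xs. T1 (take p1 xs) * T2 (drop p1 xs))"

definition vec_tensor :: "real ^ 'n \<Rightarrow> 'n tensor" where
  "vec_tensor v = (\<lambda>xs. if length xs = 1 then v $ (hd xs) else 0)"

definition tensor_power :: "nat \<Rightarrow> real ^ 'n \<Rightarrow> 'n tensor" where
  "tensor_power j v = (\<lambda>xs. if length xs = j then (\<Prod>k<j. v $ (xs ! k)) else 0)"

definition tensor_mat :: "nat \<Rightarrow> 'n tensor \<Rightarrow> real ^ 'n ^ 'n \<Rightarrow> 'n tensor" where
  "tensor_mat p T M = (\<lambda>xs. if length xs = p then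
      (\<Sum>ys\<in>{ys::'n list. length ys = p}. T ys * (\<Prod>k<p. M $ (ys ! k) $ (xs ! k))) else 0)"

definition frob_norm :: "nat \<Rightarrow> 'n tensor \<Rightarrow> real" where
  "frob_norm p T = sqrt (\<Sum>xs\<in>{xs::'n list. length xs = p}. (T xs)\<^sup>2)"

definition tadd :: "'n tensor \<Rightarrow> 'n tensor \<Rightarrow> 'n tensor" where
  "tadd A B = (\<lambda>xs. A xs + B xs)"

definition tsub :: "'n tensor \<Rightarrow> 'n tensor \<Rightarrow> 'n tensor" where
  "tsub A B = (\<lambda>xs. A xs - B xs)"

definition tscale :: "real \<Rightarrow> 'n tensor \<Rightarrow> 'n tensor" where
  "tscale c A = (\<lambda>xs. c * A xs)"

definition tsum :: "('i \<Rightarrow> 'n tensor) \<Rightarrow> 'i set \<Rightarrow> 'n tensor" where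
  "tsum F I = (\<lambda>xs. \<Sum>i\<in>I. F i xs)"

end

theory Submission
  imports Defs
begin


fun ev :: "'n::finite tensor \<Rightarrow> (real^'n) list \<Rightarrow> real" where
  "ev T [] = T []"
| "ev T (x # xs) = (\<Sum>i\<in>UNIV. x $ i * ev (\<lambda>ys. T (i # ys)) xs)"

lemma ev_cong: "(\<And>ys. length ys = length xs \<Longrightarrow> T ys = T' ys) \<Longrightarrow> ev T xs = ev T' xs"
proof (induction xs arbitrary: T T')
  case Nil then show ?case by simp
next
  case (Cons x xs)
  have "ev (\<lambda>ys. T (i # ys)) xs = ev (\<lambda>ys. T' (i # ys)) xs" for i
    by (rule Cons.IH) (simp add: Cons.prems)
  then show ?case using Cons.IH[of "\<lambda>zs. T (y#zs)"] by simp
qed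

lemma ev_sum: "finite J \<Longrightarrow> ev (\<lambda>ys. \<Sum>j\<in>J. F j ys) xs = (\<Sum>j\<in>J. ev (F j) xs)"
proof (induction xs arbitrary: F)
  case Nil then show ?case by simp
next
  case (Cons x xs)
  have "ev (\<lambda>ys. \<Sum>j\<in>J. F j (i#ys)) xs = (\<Sum>j\<in>J. ev (\<lambda>ys. F j (i#ys)) xs)" for i
    using Cons.IH[OF Cons.prems, of "\<lambda>j ys. F j (i#ys)"] by simp
  then show ?case by (simp add: sum_distrib_left sum.swap[of _ J])
qed

lemma ev_scale: "ev (\<lambda>ys. a * T ys) xs = a * ev T xs"
  by (induction xs arbitrary: T) (simp_all add: sum_distrib_left algebra_simps)

lemma ev_add: "ev (\<lambda>ys. T ys + T' ys) xs = ev T xs + ev T' xs"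
  by (induction xs arbitrary: T T') (simp_all add: sum.distrib algebra_simps)

lemma ev_diff: "ev (\<lambda>ys. T ys - T' ys) xs = ev T xs - ev T' xs"
  by (induction xs arbitrary: T T') (simp_all add: right_diff_distrib sum_subtractf)

lemma ev_zero: "ev (\<lambda>ys. 0) xs = 0"
  by (induction xs) simp_all

lemma ev_Cons_zero: "ev T (0 # xs) = 0"
  by simp

lemma ev_Cons_add: "ev T ((x + y) # xs) = ev T (x # xs) + ev T (y # xs)"
  by (simp add: sum.distrib algebra_simps)

lemma ev_Cons_scale: "ev T ((a *\<^sub>R x) # xs) = a * ev T (x # xs)"
  by (simp add: sum_distrib_left algebra_simps)

lemma ev_rep_scale: "ev T (replicate j (a *\<^sub>R y) @ zs) = a ^ j * ev T (replicate j y @ zs)"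
proof (induction j arbitrary: T)
  case 0 then show ?case by simp
next
  case (Suc j)
  show ?case by (simp add: Suc.IH sum_distrib_left algebra_simps)
qed

lemma sum_lists_Suc:
  "(\<Sum>zs\<in>{zs::'a::finite list. length zs = Suc n}. F zs) = (\<Sum>i\<in>UNIV. \<Sum>zs\<in>{zs. length zs = n}. F (i # zs))"
proof -
  have e: "{zs::'a list. length zs = Suc n} = (\<lambda>(i,zs). i # zs) ` (UNIV \<times> {zs. length zs = n})"
    by (auto simp: length_Suc_conv image_iff)
  have inj: "inj_on (\<lambda>(i,zs). i # zs) (UNIV \<times> {zs::'a list. length zs = n})"
    by (auto simp: inj_on_def)
  show ?thesis
    unfolding e sum.reindex[OF inj] by (simp add: sum.cartesian_product finite_lists_length_eq split_def)
qed

lemma ev_sum_formula: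
  "ev T xs = (\<Sum>ys\<in>{ys. length ys = length xs}. T ys * (\<Prod>k<length xs. xs ! k $ (ys ! k)))"
proof (induction xs arbitrary: T)
  case Nil then show ?case by simp
next
  case (Cons x xs)
  show ?case
    by (simp add: Cons sum_lists_Suc prod.lessThan_Suc_shift sum_distrib_left algebra_simps del: prod.lessThan_Suc)
qed

lemma ev_axis: "ev T (map (\<lambda>i. axis i 1) ys) = T ys"
proof (induction ys arbitrary: T)
  case Nil then show ?case by simp
next
  case (Cons y ys)
  have "(\<Sum>i\<in>UNIV. axis y 1 $ i * ev (\<lambda>zs. T (i#zs)) (map (\<lambda>i. axis i 1) ys)) = (\<Sum>i\<in>UNIV. if i = y then T (i#ys) else 0)"
    by (rule sum.cong) (simp, subst Cons.IH, simp add: axis_def)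
  then show ?case using Cons.IH[of "\<lambda>zs. T (y#zs)"] by simp
qed

lemma ev_contr: "ev (contr T s) xs = ev T (s # xs)"
  unfolding contr_def by (simp add: ev_sum ev_scale)

lemma ev_contr_pow: "ev (contr_pow T s j) xs = ev T (replicate j s @ xs)"
proof (induction j arbitrary: xs)
  case 0 then show ?case by (simp add: contr_pow_def)
next
  case (Suc j)
  have "contr_pow T s (Suc j) = contr (contr_pow T s j) s"
    by (simp add: contr_pow_def)
  then have "ev (contr_pow T s (Suc j)) xs = ev (contr_pow T s j) (s # xs)"
    by (simp only: ev_contr)
  also have "\<dots> = ev T (replicate j s @ s # xs)" by (rule Suc.IH)
  also have "replicate j s @ s # xs = replicate (Suc j) s @ xs"
    by (simp add: replicate_append_same[symmetric])
  finally show ?case .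
qed

lemma ev_outer: "j \<le> length xs \<Longrightarrow> ev (outer j T1 T2) xs = ev T1 (take j xs) * ev T2 (drop j xs)"
proof (induction j arbitrary: T1 xs)
  case 0
  have "outer 0 T1 T2 = (\<lambda>zs. T1 [] * T2 zs)" by (simp add: outer_def)
  then show ?case by (simp add: ev_scale)
next
  case (Suc j)
  then obtain x xs' where xs: "xs = x # xs'" by (cases xs) auto
  have o: "(\<lambda>ys. outer (Suc j) T1 T2 (i # ys)) = outer j (\<lambda>ys. T1 (i # ys)) T2" for i
    by (simp add: outer_def fun_eq_iff)
  show ?case using Suc.prems
    by (simp add: xs o Suc.IH sum_distrib_left sum_distrib_right mult_ac)
qed

lemma ev_tensor_power: "ev (tensor_power j v) (replicate j x) = (v \<bullet> x) ^ j"
proof (induction j)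
  case 0 then show ?case by (simp add: tensor_power_def)
next
  case (Suc j)
  have o: "(\<lambda>ys. tensor_power (Suc j) v (i # ys)) = (\<lambda>ys. v $ i * tensor_power j v ys)" for i
    by (simp add: tensor_power_def fun_eq_iff prod.lessThan_Suc_shift del: prod.lessThan_Suc)
  show ?case
    by (simp add: o ev_scale Suc inner_vec_def sum_distrib_right algebra_simps)
qed

lemma ev_vec_tensor: "ev (vec_tensor v) [x] = v \<bullet> x"
  by (simp add: vec_tensor_def inner_vec_def algebra_simps)




lemma sum_permute_lists:
  assumes "\<sigma> permutes {..<n}"
  shows "(\<Sum>ys\<in>{ys::'a list. length ys = n}. F (permute_list \<sigma> ys)) = (\<Sum>ys\<in>{ys. length ys = n}. F ys)"
proof (rule sum.reindex_bij_witness[of _ "permute_list (inv \<sigma>)" "permute_list \<sigma>"])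
  have inv: "inv \<sigma> permutes {..<n}" using assms by (rule permutes_inv)
  fix ys :: "'a list" assume "ys \<in> {ys. length ys = n}"
  then have l: "length ys = n" by simp
  have c1: "permute_list (inv \<sigma>) (permute_list \<sigma> ys) = ys"
    using permute_list_compose[of "inv \<sigma>" ys \<sigma>] inv l
    by (simp add: permutes_inv_o(1)[OF assms] permute_list_id)
  have c2: "permute_list \<sigma> (permute_list (inv \<sigma>) ys) = ys"
    using permute_list_compose[of \<sigma> ys "inv \<sigma>"] assms l
    by (simp add: permutes_inv_o(2)[OF assms] permute_list_id)
  show "permute_list (inv \<sigma>) (permute_list \<sigma> ys) = ys" by (rule c1)
  show "permute_list \<sigma> ys \<in> {ys. length ys = n}" using l by simp
  show "permute_list \<sigma> (permute_list (inv \<sigma>) ys) = ys" by (rule c2)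
  show "permute_list (inv \<sigma>) ys \<in> {ys. length ys = n}" using l by simp
  show "F (permute_list \<sigma> ys) = F (permute_list \<sigma> ys)" by simp
qed

lemma ev_perm_tensor:
  assumes "\<sigma> permutes {..<length xs}"
  shows "ev (perm_tensor \<sigma> T) xs = ev T (permute_list \<sigma> xs)"
proof -
  let ?L = "{ys::'a list. length ys = length xs}"
  have "ev T (permute_list \<sigma> xs) = (\<Sum>ys\<in>?L. T ys * (\<Prod>k<length xs. permute_list \<sigma> xs ! k $ (ys ! k)))"
    by (simp add: ev_sum_formula)
  also have "\<dots> = (\<Sum>ys\<in>?L. T (permute_list \<sigma> ys) * (\<Prod>k<length xs. permute_list \<sigma> xs ! k $ (permute_list \<sigma> ys ! k)))"
    by (rule sum_permute_lists[OF assms, symmetric])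
  also have "\<dots> = (\<Sum>ys\<in>?L. T (permute_list \<sigma> ys) * (\<Prod>k<length xs. xs ! k $ (ys ! k)))"
  proof (rule sum.cong[OF refl])
    fix ys assume "ys \<in> ?L"
    then have l: "length ys = length xs" by simp
    have "(\<Prod>k<length xs. permute_list \<sigma> xs ! k $ (permute_list \<sigma> ys ! k)) = (\<Prod>k<length xs. xs ! (\<sigma> k) $ (ys ! (\<sigma> k)))"
      by (rule prod.cong[OF refl]) (simp add: permute_list_nth assms l)
    also have "\<dots> = (\<Prod>k<length xs. xs ! k $ (ys ! k))"
      using prod.permute[OF assms, of "\<lambda>k. xs ! k $ (ys ! k)"] by (simp add: comp_def)
    finally show "T (permute_list \<sigma> ys) * (\<Prod>k<length xs. permute_list \<sigma> xs ! k $ (permute_list \<sigma> ys ! k)) =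
      T (permute_list \<sigma> ys) * (\<Prod>k<length xs. xs ! k $ (ys ! k))" by simp
  qed
  also have "\<dots> = ev (perm_tensor \<sigma> T) xs"
    by (simp add: ev_sum_formula perm_tensor_def)
  finally show ?thesis by simp
qed

lemma sym_ev_mset:
  assumes "sym_tensor p T" "length xs = p" "mset xs = mset ys"
  shows "ev T xs = ev T ys"
proof -
  obtain \<sigma> where s: "\<sigma> permutes {..<length ys}" "permute_list \<sigma> ys = xs"
    using mset_eq_permutation[OF assms(3)] by blast
  have ly: "length ys = p" using assms(2,3) by (metis mset_eq_length)
  have "ev T xs = ev (perm_tensor \<sigma> T) ys" using ev_perm_tensor[OF s(1)] s(2) by simp
  also have "perm_tensor \<sigma> T = T" using assms(1) s(1) ly by (simp add: sym_tensor_def)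
  finally show ?thesis .
qed

lemma sym_from_ev:
  assumes "is_tensor p T"
    and "\<And>xs ys. length xs = p \<Longrightarrow> mset xs = mset ys \<Longrightarrow> ev T xs = ev T ys"
  shows "sym_tensor p T"
  unfolding sym_tensor_def
proof (intro conjI allI impI)
  show "is_tensor p T" by fact
  fix \<sigma> assume s: "\<sigma> permutes {..<p}"
  show "perm_tensor \<sigma> T = T"
  proof
    fix ys :: "'a list"
    show "perm_tensor \<sigma> T ys = T ys"
    proof (cases "length ys = p")
      case True
      have "perm_tensor \<sigma> T ys = ev T (map (\<lambda>i. axis i 1) (permute_list \<sigma> ys))"
        by (simp add: ev_axis perm_tensor_def)
      also have "map (\<lambda>i. axis i 1) (permute_list \<sigma> ys) = permute_list \<sigma> (map (\<lambda>i. axis i 1) ys)"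
        using s True by (simp add: permute_list_map)
      also have "ev T \<dots> = ev T (map (\<lambda>i. axis i 1) ys)"
        by (rule assms(2)) (use s True in simp_all)
      finally show ?thesis by (simp add: ev_axis)
    next
      case False
      then show ?thesis using assms(1) by (simp add: perm_tensor_def is_tensor_def)
    qed
  qed
qed

lemma sym_is_tensor: "sym_tensor p T \<Longrightarrow> is_tensor p T"
  by (simp add: sym_tensor_def)

lemma sym_tadd: "sym_tensor p A \<Longrightarrow> sym_tensor p B \<Longrightarrow> sym_tensor p (tadd A B)"
  unfolding sym_tensor_def is_tensor_def tadd_def perm_tensor_def
  by (auto simp: fun_eq_iff)

lemma sym_tsub: "sym_tensor p A \<Longrightarrow> sym_tensor p B \<Longrightarrow> sym_tensor p (tsub A B)"
  unfolding sym_tensor_def is_tensor_def tsub_def perm_tensor_def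
  by (auto simp: fun_eq_iff)

lemma sym_tscale: "sym_tensor p A \<Longrightarrow> sym_tensor p (tscale c A)"
  unfolding sym_tensor_def is_tensor_def tscale_def perm_tensor_def
  by (auto simp: fun_eq_iff)

lemma sym_tsum: "(\<And>i. i \<in> I \<Longrightarrow> sym_tensor p (F i)) \<Longrightarrow> sym_tensor p (tsum F I)"
  unfolding sym_tensor_def is_tensor_def tsum_def perm_tensor_def
  by (auto simp: fun_eq_iff intro!: sum.neutral sum.cong)

lemma ev_tadd: "ev (tadd A B) xs = ev A xs + ev B xs"
  unfolding tadd_def by (rule ev_add)
lemma ev_tsub: "ev (tsub A B) xs = ev A xs - ev B xs"
  unfolding tsub_def by (rule ev_diff)
lemma ev_tscale: "ev (tscale c A) xs = c * ev A xs"
  unfolding tscale_def by (rule ev_scale)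
lemma ev_tsum: "finite I \<Longrightarrow> ev (tsum F I) xs = (\<Sum>i\<in>I. ev (F i) xs)"
  unfolding tsum_def by (rule ev_sum)

lemma sym_contr:
  assumes "sym_tensor (Suc p) T"
  shows "sym_tensor p (contr T s)"
proof (rule sym_from_ev)
  show "is_tensor p (contr T s)"
    using sym_is_tensor[OF assms] by (simp add: is_tensor_def contr_def)
  fix xs ys :: "(real^'a) list" assume "length xs = p" "mset xs = mset ys"
  then show "ev (contr T s) xs = ev (contr T s) ys"
    by (simp only: ev_contr) (rule sym_ev_mset[OF assms], simp_all)
qed

lemma permute_list_replicate:
  "\<sigma> permutes {..<n} \<Longrightarrow> permute_list \<sigma> (replicate n x) = replicate n x"
proof (rule nth_equalityI)
  fix i assume s: "\<sigma> permutes {..<n}" and "i < length (permute_list \<sigma> (replicate n x))"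
  then have "i < n" by simp
  then have "\<sigma> i < n" using permutes_in_image[OF s, of i] by simp
  then show "permute_list \<sigma> (replicate n x) ! i = replicate n x ! i"
    using \<open>i < n\<close> s by (simp add: permute_list_nth)
qed simp

lemma card_perms: "card {\<sigma>. \<sigma> permutes {..<p}} = fact p"
  by (rule card_permutations) simp_all

lemma ev_Psym:
  assumes "length xs = p"
  shows "ev (Psym p T) xs = (1 / fact p) * (\<Sum>\<sigma>\<in>{\<sigma>. \<sigma> permutes {..<p}}. ev T (permute_list \<sigma> xs))"
proof -
  have "ev (Psym p T) xs = ev (\<lambda>ys. (1 / fact p) * (\<Sum>\<sigma>\<in>{\<sigma>. \<sigma> permutes {..<p}}. perm_tensor \<sigma> T ys)) xs"
    by (rule ev_cong) (simp add: Psym_def assms)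
  also have "\<dots> = (1 / fact p) * (\<Sum>\<sigma>\<in>{\<sigma>. \<sigma> permutes {..<p}}. ev (perm_tensor \<sigma> T) xs)"
    by (subst ev_scale, subst ev_sum) (simp_all add: finite_permutations)
  also have "\<dots> = (1 / fact p) * (\<Sum>\<sigma>\<in>{\<sigma>. \<sigma> permutes {..<p}}. ev T (permute_list \<sigma> xs))"
    using assms by (simp add: ev_perm_tensor)
  finally show ?thesis .
qed

lemma ev_Psym_diag: "ev (Psym p T) (replicate p x) = ev T (replicate p x)"
  by (simp add: ev_Psym permute_list_replicate card_perms)

lemma sym_Psym: "sym_tensor p (Psym p T)"
  unfolding sym_tensor_def
proof (intro conjI allI impI)
  show "is_tensor p (Psym p T)" by (simp add: is_tensor_def Psym_def)
  fix \<tau> assume t: "\<tau> permutes {..<p}"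
  let ?P = "{\<sigma>. \<sigma> permutes {..<p}}"
  show "perm_tensor \<tau> (Psym p T) = Psym p T"
  proof
    fix xs :: "'a list"
    show "perm_tensor \<tau> (Psym p T) xs = Psym p T xs"
    proof (cases "length xs = p")
      case True
      have "(\<Sum>\<sigma>\<in>?P. perm_tensor \<sigma> T (permute_list \<tau> xs)) = (\<Sum>\<sigma>\<in>?P. T (permute_list (\<tau> \<circ> \<sigma>) xs))"
        by (rule sum.cong) (simp_all add: perm_tensor_def permute_list_compose True)
      also have "\<dots> = (\<Sum>\<sigma>\<in>?P. T (permute_list \<sigma> xs))"
      proof (rule sum.reindex_bij_witness[of _ "\<lambda>\<sigma>. inv \<tau> \<circ> \<sigma>" "\<lambda>\<sigma>. \<tau> \<circ> \<sigma>"])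
        fix \<sigma> assume "\<sigma> \<in> ?P"
        then have s: "\<sigma> permutes {..<p}" by simp
        have it: "inv \<tau> permutes {..<p}" using t by (rule permutes_inv)
        show "inv \<tau> \<circ> (\<tau> \<circ> \<sigma>) = \<sigma>" by (metis o_assoc permutes_inv_o(2)[OF t] id_comp)
        show "\<tau> \<circ> \<sigma> \<in> ?P" using permutes_compose[OF s t] by simp
        show "\<tau> \<circ> (inv \<tau> \<circ> \<sigma>) = \<sigma>" by (metis o_assoc permutes_inv_o(1)[OF t] id_comp)
        show "inv \<tau> \<circ> \<sigma> \<in> ?P" using permutes_compose[OF s it] by simp
        show "T (permute_list (\<tau> \<circ> \<sigma>) xs) = T (permute_list (\<tau> \<circ> \<sigma>) xs)" by simp
      qed
      finally show ?thesis using True by (simp add: perm_tensor_def Psym_def)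
    next
      case False then show ?thesis by (simp add: perm_tensor_def Psym_def)
    qed
  qed
qed




lemma tensor_mat_ev: "length ys = p \<Longrightarrow> tensor_mat p T M ys = ev T (map (\<lambda>y. column y M) ys)"
  by (simp add: tensor_mat_def ev_sum_formula column_def)

lemma ev_map_lin:
  "ev (\<lambda>ys. ev T (map g ys)) xs = ev T (map (\<lambda>x. \<Sum>y\<in>UNIV. x $ y *\<^sub>R g y) xs)"
proof (induction xs arbitrary: T)
  case Nil then show ?case by simp
next
  case (Cons x xs)
  let ?h = "\<lambda>x. \<Sum>y\<in>UNIV. x $ y *\<^sub>R g y"
  have "ev (\<lambda>ys. ev T (map g ys)) (x # xs) =
     (\<Sum>i\<in>UNIV. x $ i * ev (\<lambda>ys. \<Sum>j\<in>UNIV. g i $ j * ev (\<lambda>zs. T (j # zs)) (map g ys)) xs)"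
    by simp
  also have "\<dots> = (\<Sum>i\<in>UNIV. x $ i * (\<Sum>j\<in>UNIV. g i $ j * ev (\<lambda>zs. T (j # zs)) (map ?h xs)))"
    by (simp add: ev_sum ev_scale Cons.IH)
  also have "\<dots> = (\<Sum>i\<in>UNIV. \<Sum>j\<in>UNIV. x $ i * (g i $ j * ev (\<lambda>zs. T (j # zs)) (map ?h xs)))"
    by (simp add: sum_distrib_left)
  also have "\<dots> = (\<Sum>j\<in>UNIV. \<Sum>i\<in>UNIV. x $ i * (g i $ j * ev (\<lambda>zs. T (j # zs)) (map ?h xs)))"
    by (rule sum.swap)
  also have "\<dots> = (\<Sum>j\<in>UNIV. ?h x $ j * ev (\<lambda>zs. T (j # zs)) (map ?h xs))"
    by (simp add: sum_distrib_right mult_ac)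
  also have "\<dots> = ev T (map ?h (x # xs))" by simp
  finally show ?case .
qed

lemma ev_tensor_mat:
  assumes "length xs = p"
  shows "ev (tensor_mat p T M) xs = ev T (map ((*v) M) xs)"
proof -
  have "ev (tensor_mat p T M) xs = ev (\<lambda>ys. ev T (map (\<lambda>y. column y M) ys)) xs"
    by (rule ev_cong) (simp add: tensor_mat_ev assms)
  also have "\<dots> = ev T (map (\<lambda>x. \<Sum>y\<in>UNIV. x $ y *\<^sub>R column y M) xs)"
    by (rule ev_map_lin)
  also have "(\<lambda>x. \<Sum>y\<in>UNIV. x $ y *\<^sub>R column y M) = (*v) M"
    by (auto simp: fun_eq_iff matrix_mult_sum scalar_mult_eq_scaleR)
  finally show ?thesis .
qed

lemma is_tensor_tensor_mat: "is_tensor p (tensor_mat p T M)"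
  by (simp add: is_tensor_def tensor_mat_def)

lemma tensor_ext:
  assumes "is_tensor p A" "is_tensor p B" "\<And>xs. length xs = p \<Longrightarrow> ev A xs = ev B xs"
  shows "A = B"
proof
  fix ys :: "'a list"
  show "A ys = B ys"
  proof (cases "length ys = p")
    case True
    then show ?thesis using assms(3)[of "map (\<lambda>i. axis i 1) ys"] by (simp add: ev_axis)
  next
    case False then show ?thesis using assms(1,2) by (simp add: is_tensor_def)
  qed
qed

lemma sym_tensor_mat:
  assumes "sym_tensor p T"
  shows "sym_tensor p (tensor_mat p T M)"
proof (rule sym_from_ev)
  show "is_tensor p (tensor_mat p T M)" by (rule is_tensor_tensor_mat)
  fix xs ys :: "(real^'a) list" assume a: "length xs = p" "mset xs = mset ys"
  then have ly: "length ys = p" by (metis mset_eq_length)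
  have "ev T (map ((*v) M) xs) = ev T (map ((*v) M) ys)"
    by (rule sym_ev_mset[OF assms]) (use a in simp_all)
  then show "ev (tensor_mat p T M) xs = ev (tensor_mat p T M) ys"
    by (simp add: ev_tensor_mat a ly)
qed

lemma tensor_mat_tsub: "tensor_mat p (tsub A B) M = tsub (tensor_mat p A M) (tensor_mat p B M)"
  by (simp add: tensor_mat_def tsub_def fun_eq_iff sum_subtractf left_diff_distrib)

lemma tensor_mat_tadd: "tensor_mat p (tadd A B) M = tadd (tensor_mat p A M) (tensor_mat p B M)"
  by (simp add: tensor_mat_def tadd_def fun_eq_iff sum.distrib distrib_right)

lemma tensor_mat_inj:
  assumes "is_tensor p A" "is_tensor p B" "invertible W" "tensor_mat p A W = tensor_mat p B W"
  shows "A = B"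
proof (rule tensor_ext[OF assms(1,2)])
  obtain Wi where Wi: "W ** Wi = mat 1" using assms(3) unfolding invertible_def by blast
  fix xs :: "(real^'a) list" assume l: "length xs = p"
  have m: "map ((*v) W \<circ> (*v) Wi) xs = xs"
    by (induction xs) (simp_all add: matrix_vector_mul_assoc Wi)
  have "ev A xs = ev (tensor_mat p A W) (map ((*v) Wi) xs)"
    by (subst ev_tensor_mat) (simp_all add: l m)
  also have "\<dots> = ev (tensor_mat p B W) (map ((*v) Wi) xs)" using assms(4) by simp
  also have "\<dots> = ev B xs" using l by (simp add: ev_tensor_mat m)
  finally show "ev A xs = ev B xs" .
qed

lemma contr_zero:
  assumes "is_tensor (Suc q) X" "\<And>xs. length xs = q \<Longrightarrow> ev X (s # xs) = 0"
  shows "contr X s = (\<lambda>_. 0)"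
proof
  fix ys :: "'a list"
  show "contr X s ys = 0"
  proof (cases "length ys = q")
    case True
    have "contr X s ys = ev (contr X s) (map (\<lambda>i. axis i 1) ys)" by (simp add: ev_axis)
    also have "\<dots> = 0" using assms(2) True by (simp add: ev_contr)
    finally show ?thesis .
  next
    case False then show ?thesis using assms(1) by (simp add: contr_def is_tensor_def)
  qed
qed

lemma pascal_sum:
  fixes h :: "nat \<Rightarrow> real"
  shows "(\<Sum>l\<le>k. real (k choose l) * h l) + (\<Sum>l\<le>k. real (k choose l) * h (Suc l)) =
         (\<Sum>l\<le>Suc k. real (Suc k choose l) * h l)"
proof -
  have a: "(\<Sum>l\<le>k. real (k choose l) * h l) = (\<Sum>l\<le>Suc k. real (k choose l) * h l)"
    by simp
  have b: "(\<Sum>l\<le>Suc k. real (k choose l) * h l) = h 0 + (\<Sum>l\<le>k. real (k choose Suc l) * h (Suc l))"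
    by (subst sum.atMost_Suc_shift) simp
  have c: "(\<Sum>l\<le>Suc k. real (Suc k choose l) * h l) = h 0 + (\<Sum>l\<le>k. real (Suc k choose Suc l) * h (Suc l))"
    by (subst sum.atMost_Suc_shift) simp
  show ?thesis unfolding a b c
    by (simp add: sum.distrib[symmetric] algebra_simps)
qed

lemma binom_gen:
  assumes "sym_tensor p T" "k + i + j = p"
  shows "ev T (replicate k (x + t *\<^sub>R y) @ replicate i y @ replicate j x) =
    (\<Sum>l\<le>k. real (k choose l) * t ^ l * ev T (replicate (i + l) y @ replicate (j + k - l) x))"
  using assms(2)
proof (induction k arbitrary: i j)
  case 0 then show ?case by simp
next
  case (Suc k)
  let ?G = "\<lambda>a b. ev T (replicate a y @ replicate b x)"
  let ?z = "x + t *\<^sub>R y"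
  have "ev T (replicate (Suc k) ?z @ replicate i y @ replicate j x) =
        ev T (x # replicate k ?z @ replicate i y @ replicate j x) + t * ev T (y # replicate k ?z @ replicate i y @ replicate j x)"
    by (simp add: ev_Cons_add ev_Cons_scale del: ev.simps)
  also have "ev T (x # replicate k ?z @ replicate i y @ replicate j x) = ev T (replicate k ?z @ replicate i y @ replicate (Suc j) x)"
    by (rule sym_ev_mset[OF assms(1)]) (use Suc.prems in \<open>simp_all add: add_ac\<close>)
  also have "\<dots> = (\<Sum>l\<le>k. real (k choose l) * t ^ l * ?G (i + l) (Suc j + k - l))"
    by (rule Suc.IH) (use Suc.prems in simp)
  also have "ev T (y # replicate k ?z @ replicate i y @ replicate j x) = ev T (replicate k ?z @ replicate (Suc i) y @ replicate j x)"
    by (rule sym_ev_mset[OF assms(1)]) (use Suc.prems in \<open>simp_all add: add_ac\<close>)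
  also have "\<dots> = (\<Sum>l\<le>k. real (k choose l) * t ^ l * ?G (Suc i + l) (j + k - l))"
    by (rule Suc.IH) (use Suc.prems in simp)
  finally have e: "ev T (replicate (Suc k) ?z @ replicate i y @ replicate j x) =
     (\<Sum>l\<le>k. real (k choose l) * t ^ l * ?G (i + l) (Suc j + k - l)) +
     t * (\<Sum>l\<le>k. real (k choose l) * t ^ l * ?G (Suc i + l) (j + k - l))" .
  let ?h = "\<lambda>l. t ^ l * ?G (i + l) (j + Suc k - l)"
  have e1: "(\<Sum>l\<le>k. real (k choose l) * t ^ l * ?G (i + l) (Suc j + k - l)) = (\<Sum>l\<le>k. real (k choose l) * ?h l)"
    by (rule sum.cong) (simp_all add: mult_ac)
  have e2: "t * (\<Sum>l\<le>k. real (k choose l) * t ^ l * ?G (Suc i + l) (j + k - l)) = (\<Sum>l\<le>k. real (k choose l) * ?h (Suc l))"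
    by (simp add: sum_distrib_left mult_ac)
  have "ev T (replicate (Suc k) ?z @ replicate i y @ replicate j x) =
     (\<Sum>l\<le>k. real (k choose l) * ?h l) + (\<Sum>l\<le>k. real (k choose l) * ?h (Suc l))"
    by (simp only: e e1 e2)
  also have "\<dots> = (\<Sum>l\<le>Suc k. real (Suc k choose l) * ?h l)" by (rule pascal_sum)
  also have "\<dots> = (\<Sum>l\<le>Suc k. real (Suc k choose l) * t ^ l * ?G (i + l) (j + Suc k - l))"
    by (rule sum.cong) (simp_all add: mult_ac)
  finally show ?case .
qed

lemma binom_ev:
  assumes "sym_tensor p T"
  shows "ev T (replicate p (x + t *\<^sub>R y)) =
    (\<Sum>l\<le>p. (real (p choose l) * ev T (replicate l y @ replicate (p - l) x)) * t ^ l)"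
  using binom_gen[OF assms, of p 0 0 x t y] by (simp add: mult_ac)

lemma polarization_zero:
  assumes "sym_tensor p T" "\<And>x. ev T (replicate p x) = 0"
  shows "T = (\<lambda>_. 0)"
  using assms
proof (induction p arbitrary: T)
  case 0
  show ?case
  proof
    fix ys :: "'a list"
    show "T ys = 0"
    proof (cases ys)
      case Nil then show ?thesis using "0.prems"(2)[of 0] by simp
    next
      case (Cons a list) then show ?thesis using sym_is_tensor[OF "0.prems"(1)] by (simp add: is_tensor_def)
    qed
  qed
next
  case (Suc p)
  have cz: "contr T s = (\<lambda>_. 0)" for s
  proof (rule Suc.IH)
    show "sym_tensor p (contr T s)" by (rule sym_contr[OF Suc.prems(1)])
    fix x :: "real^'a"
    have "\<forall>t. (\<Sum>l\<le>Suc p. (real (Suc p choose l) * ev T (replicate l s @ replicate (Suc p - l) x)) * t ^ l) = 0"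
    proof
      fix t :: real
      show "(\<Sum>l\<le>Suc p. (real (Suc p choose l) * ev T (replicate l s @ replicate (Suc p - l) x)) * t ^ l) = 0"
        by (rule trans[OF binom_ev[OF Suc.prems(1), of x t s, symmetric] Suc.prems(2)])
    qed
    then have "\<forall>l\<le>Suc p. real (Suc p choose l) * ev T (replicate l s @ replicate (Suc p - l) x) = 0"
      by (simp only: polyfun_eq_0)
    then have "real (Suc p choose 1) * ev T (replicate 1 s @ replicate (Suc p - 1) x) = 0"
      by (rule allE[of _ 1]) simp
    then show "ev (contr T s) (replicate p x) = 0" by (simp add: ev_contr del: ev.simps)
  qed
  show ?case
  proof
    fix ys :: "'a list"
    show "T ys = 0"
    proof (cases ys)
      case Nil then show ?thesis using sym_is_tensor[OF Suc.prems(1)] by (simp add: is_tensor_def)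
    next
      case (Cons a list)
      have "contr T (axis a 1) list = T (a # list)"
      proof -
        have "(\<Sum>i\<in>UNIV. axis a 1 $ i * T (i # list)) = (\<Sum>i\<in>UNIV. if i = a then T (i # list) else 0)"
          by (rule sum.cong) (simp_all add: axis_def)
        then show ?thesis by (simp add: contr_def)
      qed
      then show ?thesis using cz[of "axis a 1"] Cons by (simp add: fun_eq_iff)
    qed
  qed
qed

lemma polarization:
  assumes "sym_tensor p A" "sym_tensor p B" "\<And>x. ev A (replicate p x) = ev B (replicate p x)"
  shows "A = B"
proof -
  have "tsub A B = (\<lambda>_. 0)"
    by (rule polarization_zero[OF sym_tsub[OF assms(1,2)]]) (simp add: ev_tsub assms(3))
  then show ?thesis by (simp add: tsub_def fun_eq_iff)
qed




lemma inj_c: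
  fixes A :: "'n::finite tensor"
  assumes symA: "sym_tensor q A" and c: "v \<bullet> s \<noteq> 0"
    and cz: "contr (Psym (Suc q) (outer q A (vec_tensor v))) s = (\<lambda>_. 0)"
  shows "A = (\<lambda>_. 0)"
proof -
  let ?X = "Psym (Suc q) (outer q A (vec_tensor v))"
  define f where "f z = ev A (replicate q z)" for z
  have diag: "ev ?X (replicate (Suc q) z) = f z * (v \<bullet> z)" for z
  proof -
    have "ev ?X (replicate (Suc q) z) = ev (outer q A (vec_tensor v)) (replicate (Suc q) z)"
      by (rule ev_Psym_diag)
    also have "\<dots> = ev A (take q (replicate (Suc q) z)) * ev (vec_tensor v) (drop q (replicate (Suc q) z))"
      by (rule ev_outer) simp
    also have "take q (replicate (Suc q) z) = replicate q z" by (simp add: take_replicate del: replicate.simps)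
    also have "drop q (replicate (Suc q) z) = [z]" by (simp add: drop_replicate del: replicate.simps, simp)
    finally show ?thesis by (simp only: ev_vec_tensor f_def)
  qed
  have Xs: "ev ?X (s # ys) = 0" for ys
    by (simp only: ev_contr[symmetric] cz ev_zero)
  have shift: "ev ?X (replicate (Suc q) (x + t *\<^sub>R s)) = ev ?X (replicate (Suc q) x)" for x t
  proof -
    have "ev ?X (replicate (Suc q) (x + t *\<^sub>R s)) =
      (\<Sum>l\<le>Suc q. (real (Suc q choose l) * ev ?X (replicate l s @ replicate (Suc q - l) x)) * t ^ l)"
      by (rule binom_ev[OF sym_Psym])
    also have "\<dots> = (real (Suc q choose 0) * ev ?X (replicate 0 s @ replicate (Suc q - 0) x)) * t ^ 0 +
       (\<Sum>l\<le>q. (real (Suc q choose Suc l) * ev ?X (replicate (Suc l) s @ replicate (Suc q - Suc l) x)) * t ^ Suc l)"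
      by (rule sum.atMost_Suc_shift)
    also have "(\<Sum>l\<le>q. (real (Suc q choose Suc l) * ev ?X (replicate (Suc l) s @ replicate (Suc q - Suc l) x)) * t ^ Suc l) = 0"
      by (rule sum.neutral) (simp only: replicate_Suc append_Cons Xs mult_zero_right mult_zero_left, simp)
    finally show ?thesis by simp
  qed
  have key: "f (x + t *\<^sub>R s) * (v \<bullet> x + t * (v \<bullet> s)) = f x * (v \<bullet> x)" for x t
    using shift[of x t] diag[of "x + t *\<^sub>R s"] diag[of x] by (simp add: inner_add_right)
  have fz: "f x = 0" for x
  proof (cases "v \<bullet> x = 0")
    case False
    have "v \<bullet> x + (- (v \<bullet> x) / (v \<bullet> s)) * (v \<bullet> s) = 0" using c by simp
    then have "f x * (v \<bullet> x) = 0" using key[of x "- (v \<bullet> x) / (v \<bullet> s)"] by simp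
    then show ?thesis using False by simp
  next
    case True
    let ?c = "\<lambda>l. real (q choose l) * ev A (replicate l s @ replicate (q - l) x)"
    have pz: "f (x + t *\<^sub>R s) = 0" if "t \<noteq> 0" for t using key[of x t] True c that by simp
    have poly: "f (x + t *\<^sub>R s) = (\<Sum>l\<le>q. ?c l * t ^ l)" for t
      unfolding f_def by (rule binom_ev[OF symA])
    have sub: "UNIV - {0} \<subseteq> {t::real. (\<Sum>l\<le>q. ?c l * t ^ l) = 0}" using pz poly by auto
    have "infinite (UNIV - {0::real})"
      by (rule Diff_infinite_finite) (simp_all add: infinite_UNIV_char_0)
    then have "infinite {t::real. (\<Sum>l\<le>q. ?c l * t ^ l) = 0}" using sub infinite_super by blast
    then have "\<forall>l\<le>q. ?c l = 0" using polyfun_finite_roots[of ?c q] by (simp only: not_ex not_not) auto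
    then have "?c 0 = 0" by (rule allE[of _ 0]) simp
    then show ?thesis by (simp add: f_def)
  qed
  show ?thesis
    by (rule polarization_zero[OF symA]) (use fz in \<open>simp add: f_def\<close>)
qed

lemma inner_Psym:
  assumes "sym_tensor p Y"
  shows "(\<Sum>zs\<in>{zs. length zs = p}. Psym p B zs * Y zs) = (\<Sum>zs\<in>{zs. length zs = p}. B zs * Y zs)"
proof -
  let ?L = "{zs::'a list. length zs = p}"
  let ?P = "{\<sigma>. \<sigma> permutes {..<p}}"
  have "(\<Sum>zs\<in>?L. Psym p B zs * Y zs) = (\<Sum>zs\<in>?L. (1 / fact p) * (\<Sum>\<sigma>\<in>?P. B (permute_list \<sigma> zs) * Y zs))"
    by (rule sum.cong) (simp_all add: Psym_def perm_tensor_def sum_distrib_right)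
  also have "\<dots> = (1 / fact p) * (\<Sum>\<sigma>\<in>?P. \<Sum>zs\<in>?L. B (permute_list \<sigma> zs) * Y zs)"
  proof -
    have "(\<Sum>zs\<in>?L. (1 / fact p) * (\<Sum>\<sigma>\<in>?P. B (permute_list \<sigma> zs) * Y zs)) =
      (1 / fact p) * (\<Sum>zs\<in>?L. \<Sum>\<sigma>\<in>?P. B (permute_list \<sigma> zs) * Y zs)"
      by (simp add: sum_distrib_left)
    also have "(\<Sum>zs\<in>?L. \<Sum>\<sigma>\<in>?P. B (permute_list \<sigma> zs) * Y zs) = (\<Sum>\<sigma>\<in>?P. \<Sum>zs\<in>?L. B (permute_list \<sigma> zs) * Y zs)"
      by (rule sum.swap)
    finally show ?thesis .
  qed
  also have "\<dots> = (1 / fact p) * (\<Sum>\<sigma>\<in>?P. \<Sum>zs\<in>?L. B (permute_list \<sigma> zs) * Y (permute_list \<sigma> zs))"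
  proof -
    have "Y (permute_list \<sigma> zs) = Y zs" if "\<sigma> \<in> ?P" for \<sigma> zs
      using assms that unfolding sym_tensor_def perm_tensor_def by (auto simp: fun_eq_iff)
    then show ?thesis by simp
  qed
  also have "\<dots> = (1 / fact p) * (\<Sum>\<sigma>\<in>?P. \<Sum>zs\<in>?L. B zs * Y zs)"
    by (simp add: sum_permute_lists[where F = "\<lambda>zs. B zs * Y zs"])
  also have "\<dots> = (\<Sum>zs\<in>?L. B zs * Y zs)"
    by (simp add: card_perms)
  finally show ?thesis .
qed

lemma contr_tsub: "contr (tsub A B) s = (\<lambda>ys. contr A s ys - contr B s ys)"
  by (simp add: contr_def tsub_def fun_eq_iff sum_subtractf right_diff_distrib)

lemma contr_tadd: "contr (tadd A B) s = (\<lambda>ys. contr A s ys + contr B s ys)"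
  by (simp add: contr_def tadd_def fun_eq_iff sum.distrib distrib_left)

lemma Psym_outer_tsub:
  "Psym p (outer k (tsub A B) w) = tsub (Psym p (outer k A w)) (Psym p (outer k B w))"
  by (simp add: Psym_def outer_def tsub_def perm_tensor_def fun_eq_iff sum_subtractf
      left_diff_distrib right_diff_distrib)

lemma outer_mv: "(\<chi> i j. a $ i * b $ j) *v x = (b \<bullet> x) *\<^sub>R (a :: real^'n)"
  by (simp add: vec_eq_iff matrix_vector_mult_def inner_vec_def sum_distrib_left mult_ac)

lemma rank1_mv: "(mat 1 - k *\<^sub>R (\<chi> i j. a $ i * b $ j)) *v x = x - (k * (b \<bullet> x)) *\<^sub>R (a :: real^'n)"
  by (simp add: matrix_vector_mult_diff_rdistrib outer_mv scaleR_matrix_vector_assoc[symmetric])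




lemma finite_len: "finite {zs :: 'a::finite list. length zs = n}"
  using finite_lists_length_eq[of "UNIV :: 'a set" n] by simp

theorem mainTheorem1:
  fixes p :: nat and Cb Ct :: "'n::finite tensor" and W :: "real ^ 'n ^ 'n" and s :: "real ^ 'n"
  assumes "p \<ge> 2"
    and "sym_tensor p Cb" and "sym_tensor p Ct"
    and "invertible W"
    and "s \<noteq> 0"
  defines "v \<equiv> transpose (matrix_inv W) *v (matrix_inv W *v s)"
  shows "\<exists>Cp. sym_tensor p Cp
    \<comment> \<open>(a)\<close>
    \<and> (\<forall>C. (sym_tensor p C \<and> contr C s = contr Ct s \<and>
              (\<forall>C'. sym_tensor p C' \<and> contr C' s = contr Ct s \<and> C' \<noteq> C \<longrightarrow>
                 frob_norm p (tensor_mat p (tsub C Cb) W) < frob_norm p (tensor_mat p (tsub C' Cb) W)))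
            \<longleftrightarrow> C = Cp)
    \<comment> \<open>(b)\<close>
    \<and> Cp = tadd Cb (tsum (\<lambda>j. tscale ((-1) ^ (j + 1) * real (p choose j) * (v \<bullet> s) powi (- int j))
                  (Psym p (outer j (tensor_power j v) (contr_pow (tsub Ct Cb) s j)))) {1..p})
    \<comment> \<open>(c)\<close>
    \<and> (\<exists>!A. sym_tensor (p - 1) A \<and> contr (Psym p (outer (p - 1) A (vec_tensor v))) s = contr (tsub Ct Cb) s)
    \<and> (\<forall>A. sym_tensor (p - 1) A \<and> contr (Psym p (outer (p - 1) A (vec_tensor v))) s = contr (tsub Ct Cb) s
           \<longrightarrow> Cp = tadd Cb (Psym p (outer (p - 1) A (vec_tensor v))))
    \<comment> \<open>(d)\<close>
    \<and> (\<forall>C. sym_tensor p C \<longrightarrow>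
          (tensor_mat p (tsub C Ct) W =
             tensor_mat p (tensor_mat p (tsub Cb Ct) W)
               (mat 1 - (1 / (s \<bullet> (transpose (matrix_inv W) *v (matrix_inv W *v s))))
                   *\<^sub>R (\<chi> i j. (matrix_inv W *v s) $ i * (matrix_inv W *v s) $ j))
           \<longleftrightarrow> C = Cp))"
proof -
  obtain q where pq: "p = Suc q" and q1: "1 \<le> q" using assms(1) by (cases p) auto
  have pm1: "p - 1 = q" using pq by simp
  have symCb: "sym_tensor p Cb" and symCt: "sym_tensor p Ct" using assms(2,3) .
  define Wi where "Wi = matrix_inv W"
  have WW: "W ** Wi = mat 1 \<and> Wi ** W = mat 1"
    unfolding Wi_def matrix_inv_def using assms(4)[unfolded invertible_def] by (rule someI_ex)
  then have WWi: "W ** Wi = mat 1" and WiW: "Wi ** W = mat 1" by auto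
  define u where "u = Wi *v s"
  have v_eq: "v = transpose Wi *v u" by (simp add: v_def Wi_def u_def)
  have Wu: "W *v u = s" by (simp add: u_def matrix_vector_mul_assoc WWi)
  have u0: "u \<noteq> 0" using Wu assms(5) by auto
  have vW: "v \<bullet> (W *v x) = u \<bullet> x" for x
  proof -
    have "v \<bullet> (W *v x) = (v v* W) \<bullet> x" by (simp add: dot_lmul_matrix)
    also have "v v* W = u" by (simp add: v_eq vector_matrix_mul_assoc WiW)
    finally show ?thesis .
  qed
  define c where "c = v \<bullet> s"
  have c_eq: "c = u \<bullet> u" using vW[of u] by (simp add: c_def Wu)
  have cpos: "c > 0" using u0 c_eq by simp
  define Q where "Q = mat 1 - (1 / c) *\<^sub>R (\<chi> i j. s $ i * v $ j)"
  have Qx: "Q *v x = x - (v \<bullet> x / c) *\<^sub>R s" for x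
    by (simp add: Q_def rank1_mv)
  have Qs: "Q *v s = 0" using Qx[of s] cpos by (simp add: c_def)
  define D where "D = tsub Cb Ct"
  define E where "E = tsub Ct Cb"
  have symD: "sym_tensor p D" unfolding D_def by (rule sym_tsub[OF symCb symCt])
  have symE: "sym_tensor p E" unfolding E_def by (rule sym_tsub[OF symCt symCb])
  define Cp where "Cp = tadd Ct (tensor_mat p D Q)"
  have symTQ: "sym_tensor p (tensor_mat p D Q)" by (rule sym_tensor_mat[OF symD])
  have symCp: "sym_tensor p Cp" unfolding Cp_def by (rule sym_tadd[OF symCt symTQ])
  have TQs: "contr (tensor_mat p D Q) s = (\<lambda>_. 0)"
  proof (rule contr_zero)
    show "is_tensor (Suc q) (tensor_mat p D Q)" using pq is_tensor_tensor_mat by simp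
    fix xs :: "(real^'n) list" assume "length xs = q"
    then have "length (s # xs) = p" using pq by simp
    then show "ev (tensor_mat p D Q) (s # xs) = 0" by (simp only: ev_tensor_mat list.map Qs ev_Cons_zero)
  qed
  have contrCp: "contr Cp s = contr Ct s"
    by (simp add: Cp_def contr_tadd TQs)
  define coef where "coef j = (-1) ^ (j + 1) * real (p choose j) * c powi (- int j)" for j
  define F where "F x = ev Cb (replicate p x) + (\<Sum>j\<in>{1..p}. coef j * ((v \<bullet> x) ^ j * ev E (replicate j s @ replicate (p - j) x)))" for x
  have split0: "(\<Sum>l\<le>p. g l) = g 0 + (\<Sum>l\<in>{1..p}. g l)" for g :: "nat \<Rightarrow> real"
  proof -
    have "{..p} = insert 0 {1..p}" by auto
    then show ?thesis by simp
  qed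
  have diagCp: "ev Cp (replicate p x) = F x" for x
  proof -
    let ?a = "v \<bullet> x / c"
    have Qx': "Q *v x = x + (- ?a) *\<^sub>R s" by (simp add: Qx)
    have "ev Cp (replicate p x) = ev Ct (replicate p x) + ev D (replicate p (Q *v x))"
      by (simp add: Cp_def ev_tadd ev_tensor_mat del: ev.simps)
    also have "ev D (replicate p (Q *v x)) = (\<Sum>l\<le>p. (real (p choose l) * ev D (replicate l s @ replicate (p - l) x)) * (- ?a) ^ l)"
      unfolding Qx' by (rule binom_ev[OF symD])
    also have "\<dots> = ev D (replicate p x) + (\<Sum>l\<in>{1..p}. (real (p choose l) * ev D (replicate l s @ replicate (p - l) x)) * (- ?a) ^ l)"
      by (subst split0) simp
    also have "(\<Sum>l\<in>{1..p}. (real (p choose l) * ev D (replicate l s @ replicate (p - l) x)) * (- ?a) ^ l) =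
      (\<Sum>j\<in>{1..p}. coef j * ((v \<bullet> x) ^ j * ev E (replicate j s @ replicate (p - j) x)))"
    proof (rule sum.cong[OF refl])
      fix l assume "l \<in> {1..p}"
      have eD: "ev D ys = - ev E ys" for ys by (simp add: D_def E_def ev_tsub)
      show "(real (p choose l) * ev D (replicate l s @ replicate (p - l) x)) * (- ?a) ^ l =
        coef l * ((v \<bullet> x) ^ l * ev E (replicate l s @ replicate (p - l) x))"
      proof -
        have "(- ?a) ^ l = ((-1) * ?a) ^ l" by simp
        also have "\<dots> = (-1) ^ l * ?a ^ l" by (rule power_mult_distrib)
        finally have p1: "(- ?a) ^ l = (-1) ^ l * (v \<bullet> x) ^ l * (1 / c ^ l)" by (simp add: power_divide)
        have p2: "c powi (- int l) = 1 / c ^ l" by (simp add: power_int_minus_divide)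
        have p3: "(-1::real) ^ (l + 1) = (-1) ^ l * (-1)" by simp
        have aux: "(C0 * (- e)) * (s0 * A * z) = (s0 * (-1) * C0 * z) * (A * e)" for C0 e s0 A z :: real
          by (simp add: algebra_simps)
        show ?thesis unfolding coef_def eD p1 p2 p3 by (rule aux)
      qed
    qed
    also have "ev D (replicate p x) = ev Cb (replicate p x) - ev Ct (replicate p x)"
      by (simp add: D_def ev_tsub)
    finally show ?thesis by (simp add: F_def)
  qed
  define Rb where "Rb = tadd Cb (tsum (\<lambda>j. tscale ((-1) ^ (j + 1) * real (p choose j) * (v \<bullet> s) powi (- int j))
                  (Psym p (outer j (tensor_power j v) (contr_pow (tsub Ct Cb) s j)))) {1..p})"
  have Rb_eq: "Cp = Rb"
  proof (rule polarization[OF symCp])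
    show "sym_tensor p Rb" unfolding Rb_def
      by (intro sym_tadd symCb sym_tsum sym_tscale sym_Psym)
    fix x
    have "ev Rb (replicate p x) = F x"
    proof -
      have t: "ev (Psym p (outer j (tensor_power j v) (contr_pow E s j))) (replicate p x) =
         (v \<bullet> x) ^ j * ev E (replicate j s @ replicate (p - j) x)" if "j \<in> {1..p}" for j
      proof -
        have jp: "j \<le> p" using that by simp
        have "ev (Psym p (outer j (tensor_power j v) (contr_pow E s j))) (replicate p x) =
           ev (tensor_power j v) (take j (replicate p x)) * ev (contr_pow E s j) (drop j (replicate p x))"
          by (simp only: ev_Psym_diag) (rule ev_outer, simp add: jp)
        also have "take j (replicate p x) = replicate j x" using jp by (simp add: take_replicate min_def)
        also have "drop j (replicate p x) = replicate (p - j) x" by (simp add: drop_replicate)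
        finally show ?thesis by (simp only: ev_tensor_power ev_contr_pow)
      qed
      show ?thesis unfolding Rb_def
        by (simp add: ev_tadd ev_tsum ev_tscale t F_def c_def E_def[symmetric] coef_def del: ev.simps)
    qed
    then show "ev Cp (replicate p x) = ev Rb (replicate p x)" by (simp add: diagCp)
  qed
  define A0 where "A0 = tsum (\<lambda>j. tscale (coef j) (Psym q (outer (j - 1) (tensor_power (j - 1) v) (contr_pow E s j)))) {1..p}"
  have symA0: "sym_tensor q A0" unfolding A0_def
    by (intro sym_tsum sym_tscale sym_Psym)
  define Y0 where "Y0 = Psym p (outer q A0 (vec_tensor v))"
  have diagA0: "ev A0 (replicate q x) * (v \<bullet> x) = F x - ev Cb (replicate p x)" for x
  proof -
    have t: "ev (Psym q (outer (j - 1) (tensor_power (j - 1) v) (contr_pow E s j))) (replicate q x) * (v \<bullet> x) =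
       (v \<bullet> x) ^ j * ev E (replicate j s @ replicate (p - j) x)" if "j \<in> {1..p}" for j
    proof -
      have jp: "j - 1 \<le> q" "1 \<le> j" using that pq by auto
      have "ev (Psym q (outer (j - 1) (tensor_power (j - 1) v) (contr_pow E s j))) (replicate q x) =
         ev (tensor_power (j - 1) v) (take (j - 1) (replicate q x)) * ev (contr_pow E s j) (drop (j - 1) (replicate q x))"
        by (simp only: ev_Psym_diag) (rule ev_outer, use jp in simp)
      also have "take (j - 1) (replicate q x) = replicate (j - 1) x" using jp by (simp add: take_replicate min_def)
      also have "drop (j - 1) (replicate q x) = replicate (p - j) x" using jp pq by (simp add: drop_replicate)
      finally have eq: "ev (Psym q (outer (j - 1) (tensor_power (j - 1) v) (contr_pow E s j))) (replicate q x) =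
         (v \<bullet> x) ^ (j - 1) * ev E (replicate j s @ replicate (p - j) x)"
        by (simp only: ev_tensor_power ev_contr_pow)
      have pw: "(v \<bullet> x) ^ (j - 1) * (v \<bullet> x) = (v \<bullet> x) ^ j" using jp
        by (cases j) (auto simp: power_Suc2)
      have "ev (Psym q (outer (j - 1) (tensor_power (j - 1) v) (contr_pow E s j))) (replicate q x) * (v \<bullet> x) =
         (v \<bullet> x) ^ (j - 1) * ev E (replicate j s @ replicate (p - j) x) * (v \<bullet> x)"
        by (simp only: eq)
      also have "\<dots> = (v \<bullet> x) ^ (j - 1) * (v \<bullet> x) * ev E (replicate j s @ replicate (p - j) x)"
        by (simp only: mult_ac)
      also have "\<dots> = (v \<bullet> x) ^ j * ev E (replicate j s @ replicate (p - j) x)"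
        by (simp only: pw)
      finally show ?thesis .
    qed
    have "ev A0 (replicate q x) * (v \<bullet> x) =
      (\<Sum>j\<in>{1..p}. coef j * (ev (Psym q (outer (j - 1) (tensor_power (j - 1) v) (contr_pow E s j))) (replicate q x) * (v \<bullet> x)))"
      by (simp add: A0_def ev_tsum ev_tscale sum_distrib_left mult_ac del: ev.simps)
    also have "\<dots> = (\<Sum>j\<in>{1..p}. coef j * ((v \<bullet> x) ^ j * ev E (replicate j s @ replicate (p - j) x)))"
      by (rule sum.cong) (simp_all only: t)
    finally show ?thesis by (simp add: F_def)
  qed
  have CpA: "Cp = tadd Cb Y0"
  proof (rule polarization[OF symCp])
    show "sym_tensor p (tadd Cb Y0)" unfolding Y0_def by (intro sym_tadd symCb sym_Psym)
    fix x
    have "ev Y0 (replicate p x) = ev A0 (take q (replicate p x)) * ev (vec_tensor v) (drop q (replicate p x))"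
      unfolding Y0_def by (simp only: ev_Psym_diag) (rule ev_outer, simp add: pq)
    also have "take q (replicate p x) = replicate q x" using pq by (simp add: take_replicate del: replicate.simps)
    also have "drop q (replicate p x) = [x]" using pq by (simp add: drop_replicate del: replicate.simps, simp)
    finally have "ev Y0 (replicate p x) = ev A0 (replicate q x) * (v \<bullet> x)" by (simp only: ev_vec_tensor)
    then show "ev Cp (replicate p x) = ev (tadd Cb Y0) (replicate p x)"
      by (simp add: ev_tadd diagA0 diagCp del: ev.simps)
  qed
  have Y0_eq: "Y0 = tsub Cp Cb" using CpA by (simp add: tadd_def tsub_def fun_eq_iff)
  have A0sat: "contr Y0 s = contr E s"
    by (simp add: Y0_eq E_def contr_tsub contrCp)
  have c0: "v \<bullet> s \<noteq> 0" using cpos by (simp add: c_def)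
  have uniqA: "A1 = A0" if "sym_tensor q A1" "contr (Psym p (outer q A1 (vec_tensor v))) s = contr E s" for A1
  proof -
    have "tsub A1 A0 = (\<lambda>_. 0)"
    proof (rule inj_c[OF sym_tsub[OF that(1) symA0] c0])
      show "contr (Psym (Suc q) (outer q (tsub A1 A0) (vec_tensor v))) s = (\<lambda>_. 0)"
        using that(2) A0sat unfolding Y0_def pq[symmetric] Psym_outer_tsub contr_tsub by simp
    qed
    then show ?thesis by (simp add: tsub_def fun_eq_iff)
  qed
  define P' where "P' = mat 1 - (1 / (s \<bullet> (transpose (matrix_inv W) *v (matrix_inv W *v s))))
                   *\<^sub>R (\<chi> i j. (matrix_inv W *v s) $ i * (matrix_inv W *v s) $ j)"
  have P'x: "W *v (P' *v x) = Q *v (W *v x)" for x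
  proof -
    have "s \<bullet> (transpose (matrix_inv W) *v (matrix_inv W *v s)) = c"
      unfolding v_def[symmetric] c_def by (rule inner_commute)
    then have "P' = mat 1 - (1 / c) *\<^sub>R (\<chi> i j. u $ i * u $ j)"
      by (simp add: P'_def u_def Wi_def)
    then have "P' *v x = x - (u \<bullet> x / c) *\<^sub>R u" by (simp add: rank1_mv)
    then show ?thesis
      by (simp add: Qx vW matrix_vector_mult_diff_distrib matrix_vector_mult_scaleR Wu)
  qed
  have TQ_eq: "tsub Cp Ct = tensor_mat p D Q" by (simp add: Cp_def tadd_def tsub_def fun_eq_iff)
  have dkey: "tensor_mat p (tensor_mat p (tsub Cb Ct) W) P' = tensor_mat p (tsub Cp Ct) W"
  proof (rule tensor_ext[OF is_tensor_tensor_mat is_tensor_tensor_mat])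
    fix xs :: "(real^'n) list" assume l: "length xs = p"
    have mm: "map ((*v) W \<circ> (*v) P') xs = map ((*v) Q \<circ> (*v) W) xs" by (simp add: comp_def P'x)
    show "ev (tensor_mat p (tensor_mat p (tsub Cb Ct) W) P') xs = ev (tensor_mat p (tsub Cp Ct) W) xs"
      using l by (simp add: ev_tensor_mat TQ_eq D_def[symmetric] mm del: ev.simps)
  qed
  have akey: "frob_norm p (tensor_mat p (tsub Cp Cb) W) < frob_norm p (tensor_mat p (tsub C' Cb) W)"
    if C': "sym_tensor p C'" "contr C' s = contr Ct s" "C' \<noteq> Cp" for C'
  proof -
    let ?L = "{zs::'n list. length zs = p}"
    define X where "X = tensor_mat p (tsub Cp Cb) W"
    define Y where "Y = tensor_mat p (tsub C' Cp) W"
    have XY: "tensor_mat p (tsub C' Cb) W = tadd X Y"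
    proof -
      have "tsub C' Cb = tadd (tsub Cp Cb) (tsub C' Cp)" by (simp add: tadd_def tsub_def fun_eq_iff)
      then show ?thesis by (simp add: X_def Y_def tensor_mat_tadd)
    qed
    have symY: "sym_tensor p Y" unfolding Y_def by (intro sym_tensor_mat sym_tsub C'(1) symCp)
    have Yu: "contr Y u = (\<lambda>_. 0)"
    proof (rule contr_zero)
      show "is_tensor (Suc q) Y" using pq is_tensor_tensor_mat Y_def by simp
      fix xs :: "(real^'n) list" assume "length xs = q"
      then have l: "length (u # xs) = p" using pq by simp
      have cz: "contr (tsub C' Cp) s = (\<lambda>_. 0)" by (simp add: contr_tsub C'(2) contrCp)
      have "ev Y (u # xs) = ev (tsub C' Cp) (s # map ((*v) W) xs)"
        unfolding Y_def by (simp only: ev_tensor_mat[OF l] list.map Wu)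
      also have "\<dots> = 0" by (simp only: ev_contr[symmetric] cz ev_zero)
      finally show "ev Y (u # xs) = 0" .
    qed
    define A' where "A' = tensor_mat q A0 W"
    have symA': "sym_tensor q A'" unfolding A'_def by (rule sym_tensor_mat[OF symA0])
    have Xf: "X = Psym p (outer 1 (vec_tensor u) A')"
    proof (rule polarization)
      show "sym_tensor p X" unfolding X_def by (intro sym_tensor_mat sym_tsub symCp symCb)
      show "sym_tensor p (Psym p (outer 1 (vec_tensor u) A'))" by (rule sym_Psym)
      fix x
      have "ev X (replicate p x) = ev Y0 (replicate p (W *v x))"
        by (simp add: X_def ev_tensor_mat Y0_eq del: ev.simps)
      also have "\<dots> = ev A0 (take q (replicate p (W *v x))) * ev (vec_tensor v) (drop q (replicate p (W *v x)))"
        unfolding Y0_def by (simp only: ev_Psym_diag) (rule ev_outer, simp add: pq)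
      also have "take q (replicate p (W *v x)) = replicate q (W *v x)" using pq by (simp add: take_replicate del: replicate.simps)
      also have "drop q (replicate p (W *v x)) = [W *v x]" using pq by (simp add: drop_replicate del: replicate.simps, simp)
      finally have e1: "ev X (replicate p x) = ev A0 (replicate q (W *v x)) * (u \<bullet> x)" by (simp only: ev_vec_tensor vW)
      have "ev (Psym p (outer 1 (vec_tensor u) A')) (replicate p x) =
         ev (vec_tensor u) (take 1 (replicate p x)) * ev A' (drop 1 (replicate p x))"
        by (simp only: ev_Psym_diag) (rule ev_outer, simp add: pq)
      also have "take 1 (replicate p x) = [x]" using pq by simp
      also have "drop 1 (replicate p x) = replicate q x" using pq by simp
      finally have e2: "ev (Psym p (outer 1 (vec_tensor u) A')) (replicate p x) = (u \<bullet> x) * ev A0 (replicate q (W *v x))"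
        by (simp add: ev_vec_tensor A'_def ev_tensor_mat del: ev.simps)
      show "ev X (replicate p x) = ev (Psym p (outer 1 (vec_tensor u) A')) (replicate p x)"
        using e1 e2 by simp
    qed
    have orth: "(\<Sum>zs\<in>?L. X zs * Y zs) = 0"
    proof -
      have "(\<Sum>zs\<in>?L. X zs * Y zs) = (\<Sum>zs\<in>?L. outer 1 (vec_tensor u) A' zs * Y zs)"
        unfolding Xf by (rule inner_Psym[OF symY])
      also have "\<dots> = (\<Sum>i\<in>UNIV. \<Sum>ws\<in>{ws. length ws = q}. outer 1 (vec_tensor u) A' (i # ws) * Y (i # ws))"
        unfolding pq by (rule sum_lists_Suc)
      also have "\<dots> = (\<Sum>i\<in>UNIV. \<Sum>ws\<in>{ws. length ws = q}. A' ws * (u $ i * Y (i # ws)))"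
        by (simp add: outer_def vec_tensor_def mult_ac)
      also have "\<dots> = (\<Sum>ws\<in>{ws. length ws = q}. A' ws * contr Y u ws)"
      proof -
        have "(\<Sum>i\<in>UNIV. \<Sum>ws\<in>{ws. length ws = q}. A' ws * (u $ i * Y (i # ws))) =
          (\<Sum>ws\<in>{ws. length ws = q}. \<Sum>i\<in>UNIV. A' ws * (u $ i * Y (i # ws)))"
          by (rule sum.swap)
        then show ?thesis by (simp add: contr_def sum_distrib_left)
      qed
      also have "\<dots> = 0" by (simp add: Yu)
      finally show ?thesis .
    qed
    have Ypos: "(\<Sum>zs\<in>?L. (Y zs)\<^sup>2) > 0"
    proof (rule ccontr)
      assume "\<not> (\<Sum>zs\<in>?L. (Y zs)\<^sup>2) > 0"
      moreover have "(\<Sum>zs\<in>?L. (Y zs)\<^sup>2) \<ge> 0" by (rule sum_nonneg) simp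
      ultimately have "(\<Sum>zs\<in>?L. (Y zs)\<^sup>2) = 0" by linarith
      then have all0: "\<forall>zs\<in>?L. (Y zs)\<^sup>2 = 0"
        by (subst (asm) sum_nonneg_eq_0_iff) (simp_all add: finite_len)
      have Yz: "Y zs = 0" for zs
      proof (cases "length zs = p")
        case True then show ?thesis using all0 by simp
      next
        case False then show ?thesis unfolding Y_def by (simp add: tensor_mat_def)
      qed
      have z0: "tensor_mat p (\<lambda>_. 0) W = (\<lambda>_. 0)" by (simp add: tensor_mat_def fun_eq_iff)
      have eqT: "tensor_mat p (tsub C' Cp) W = tensor_mat p (\<lambda>_. 0) W"
        using Yz unfolding z0 Y_def[symmetric] by (simp add: fun_eq_iff)
      have z: "is_tensor p (\<lambda>_::'n list. (0::real))" by (simp add: is_tensor_def)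
      have "tsub C' Cp = (\<lambda>_. 0)"
        by (rule tensor_mat_inj[OF sym_is_tensor[OF sym_tsub[OF C'(1) symCp]] z assms(4) eqT])
      then have "C' = Cp" by (simp add: tsub_def fun_eq_iff)
      then show False using C'(3) by simp
    qed
    have "(\<Sum>zs\<in>?L. (tensor_mat p (tsub C' Cb) W zs)\<^sup>2) = (\<Sum>zs\<in>?L. (X zs)\<^sup>2) + (\<Sum>zs\<in>?L. (Y zs)\<^sup>2) + 2 * (\<Sum>zs\<in>?L. X zs * Y zs)"
      by (simp add: XY tadd_def power2_sum sum.distrib sum_distrib_left mult.assoc)
    then have "(\<Sum>zs\<in>?L. (X zs)\<^sup>2) < (\<Sum>zs\<in>?L. (tensor_mat p (tsub C' Cb) W zs)\<^sup>2)"
      using orth Ypos by simp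
    then show ?thesis unfolding frob_norm_def X_def by simp
  qed
  have ha: "\<forall>C. (sym_tensor p C \<and> contr C s = contr Ct s \<and>
              (\<forall>C'. sym_tensor p C' \<and> contr C' s = contr Ct s \<and> C' \<noteq> C \<longrightarrow>
                 frob_norm p (tensor_mat p (tsub C Cb) W) < frob_norm p (tensor_mat p (tsub C' Cb) W)))
            \<longleftrightarrow> C = Cp"
  proof (intro allI iffI)
    fix C :: "'n tensor" assume h: "sym_tensor p C \<and> contr C s = contr Ct s \<and>
              (\<forall>C'. sym_tensor p C' \<and> contr C' s = contr Ct s \<and> C' \<noteq> C \<longrightarrow>
                 frob_norm p (tensor_mat p (tsub C Cb) W) < frob_norm p (tensor_mat p (tsub C' Cb) W))"
    show "C = Cp"
    proof (rule ccontr)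
      assume ne: "C \<noteq> Cp"
      have 1: "frob_norm p (tensor_mat p (tsub C Cb) W) < frob_norm p (tensor_mat p (tsub Cp Cb) W)"
        using h[THEN conjunct2, THEN conjunct2, rule_format, of Cp] symCp contrCp ne by simp
      have 2: "frob_norm p (tensor_mat p (tsub Cp Cb) W) < frob_norm p (tensor_mat p (tsub C Cb) W)"
      proof -
        have hs: "sym_tensor p C" using h by (rule conjunct1)
        have hc: "contr C s = contr Ct s" using h[THEN conjunct2] by (rule conjunct1)
        show ?thesis by (rule akey[OF hs hc ne])
      qed
      show False using 1 2 by simp
    qed
  next
    fix C :: "'n tensor" assume "C = Cp"
    then show "sym_tensor p C \<and> contr C s = contr Ct s \<and>
              (\<forall>C'. sym_tensor p C' \<and> contr C' s = contr Ct s \<and> C' \<noteq> C \<longrightarrow>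
                 frob_norm p (tensor_mat p (tsub C Cb) W) < frob_norm p (tensor_mat p (tsub C' Cb) W))"
    proof (intro conjI allI impI)
      show "sym_tensor p C" using \<open>C = Cp\<close> symCp by simp
      show "contr C s = contr Ct s" using \<open>C = Cp\<close> contrCp by simp
      fix C' assume h': "sym_tensor p C' \<and> contr C' s = contr Ct s \<and> C' \<noteq> C"
      have "frob_norm p (tensor_mat p (tsub Cp Cb) W) < frob_norm p (tensor_mat p (tsub C' Cb) W)"
        by (rule akey) (use h' \<open>C = Cp\<close> in simp_all)
      then show "frob_norm p (tensor_mat p (tsub C Cb) W) < frob_norm p (tensor_mat p (tsub C' Cb) W)"
        using \<open>C = Cp\<close> by simp
    qed
  qed
  have hc1: "\<exists>!A. sym_tensor (p - 1) A \<and> contr (Psym p (outer (p - 1) A (vec_tensor v))) s = contr (tsub Ct Cb) s"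
    unfolding pm1 E_def[symmetric]
  proof (rule ex1I[of _ A0])
    show "sym_tensor q A0 \<and> contr (Psym p (outer q A0 (vec_tensor v))) s = contr E s"
      using symA0 A0sat unfolding Y0_def by simp
    fix A1 :: "'n tensor" assume h1: "sym_tensor q A1 \<and> contr (Psym p (outer q A1 (vec_tensor v))) s = contr E s"
    show "A1 = A0" by (rule uniqA) (use h1 in simp_all)
  qed
  have hc2: "\<forall>A. sym_tensor (p - 1) A \<and> contr (Psym p (outer (p - 1) A (vec_tensor v))) s = contr (tsub Ct Cb) s
           \<longrightarrow> Cp = tadd Cb (Psym p (outer (p - 1) A (vec_tensor v)))"
    unfolding pm1 E_def[symmetric]
  proof (intro allI impI)
    fix A1 :: "'n tensor" assume "sym_tensor q A1 \<and> contr (Psym p (outer q A1 (vec_tensor v))) s = contr E s"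
    then have "A1 = A0" by (intro uniqA) simp_all
    then show "Cp = tadd Cb (Psym p (outer q A1 (vec_tensor v)))" using CpA unfolding Y0_def by simp
  qed
  have hd: "\<forall>C. sym_tensor p C \<longrightarrow>
          (tensor_mat p (tsub C Ct) W = tensor_mat p (tensor_mat p (tsub Cb Ct) W) P' \<longleftrightarrow> C = Cp)"
  proof (intro allI impI iffI)
    fix C :: "'n tensor" assume sC: "sym_tensor p C"
    assume "tensor_mat p (tsub C Ct) W = tensor_mat p (tensor_mat p (tsub Cb Ct) W) P'"
    then have "tensor_mat p (tsub C Ct) W = tensor_mat p (tsub Cp Ct) W" using dkey by simp
    then have "tsub C Ct = tsub Cp Ct"
      by (rule tensor_mat_inj[OF sym_is_tensor[OF sym_tsub[OF sC symCt]] sym_is_tensor[OF sym_tsub[OF symCp symCt]] assms(4)])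
    then show "C = Cp" by (simp add: tsub_def fun_eq_iff)
  next
    fix C :: "'n tensor" assume "C = Cp"
    then show "tensor_mat p (tsub C Ct) W = tensor_mat p (tensor_mat p (tsub Cb Ct) W) P'" using dkey by simp
  qed
  show ?thesis
    apply (rule exI[of _ Cp])
    apply (intro conjI)
         apply (rule symCp)
        apply (rule ha)
       apply (rule Rb_eq[unfolded Rb_def])
      apply (rule hc1)
     apply (rule hc2)
    apply (rule hd[unfolded P'_def])
    done
qed


end
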